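(* Let $(\underline{\mathbf{r}},\overline{\mathbf{r}},\mathbf{c},\mathbf{c})$ be a realizable four-tuple of integer vectors with $\underline{\mathbf{r}}$ (length $n_1$) and $\mathbf{c}$ (length $n_2$) non-increasing and $\underline{\mathbf{r}}\le\overline{\mathbf{r}}$. Run the procedure Phase Two described in the context, and let $\mathbf{r}^{(k)}$ and $\overline{\mathbf{r}}^{(k)}$ be the states of $\mathbf{r}$ and $\overline{\mathbf{r}}$ after exactly $k$ iterations of its outer loop. Then $(\mathbf{r}^{(k)},\mathbf{r}^{(k)},\mathbf{c},\mathbf{c})$ is realizable if and only if $k=\delta_2=\Sigma_{n_2}\mathbf{c}-\Sigma_{n_1}\underline{\mathbf{r}}$.
   Context: Inequalities between vectors are componentwise. A four-tuple $(\underline{\mathbf{r}},\overline{\mathbf{r}},\underline{\mathbf{c}},\overline{\mathbf{c}})$ (first two of length $n_1$, last two of length $n_2$) is realizable if there is a bipartite graph $G=(U,V,E)$, $U=\{u_1,\dots,u_{n_1}\}$, $V=\{v_1,\dots,v_{n_2}\}$, with $\underline r_i\le d_G(u_i)\le\overline r_i$ and $\underline c_j\le d_G(v_j)\le\overline c_j$ for all $i,j$. $\Sigma_k\mathbf{x}=\sum_{i=1}^k x_i$. Phase Two: set $\mathbf{r}\leftarrow\underline{\mathbf{r}}$, $\delta_2\leftarrow\Sigma_{n_2}\mathbf{c}-\Sigma_{n_1}\underline{\mathbf{r}}$, $i\leftarrow n_1$; for $k=1,\dots,\delta_2$ (outer loop): while $r_i=\overline r_i$ set $i\leftarrow i-1$;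 let $j=\min\{\ell:r_\ell=r_i\}$; swap $\overline r_i$ and $\overline r_j$; set $r_j\leftarrow r_j+1$. Return $(\mathbf{r},\mathbf{c})$. *)

theory Defs
  imports Main
begin

text \<open>Vectors are lists of integers, indexed from 0 (paper index i corresponds to list index i-1).
  A bipartite graph on U = {u_0..u_(n1-1)}, V = {v_0..v_(n2-1)} is a set of pairs E.\<close>

definition realizable :: "int list \<Rightarrow> int list \<Rightarrow> int list \<Rightarrow> int list \<Rightarrow> bool" where
  "realizable rl rh cl ch \<longleftrightarrow>
     length rl = length rh \<and> length cl = length ch \<and>
     (\<exists>E. E \<subseteq> {0..<length rl} \<times> {0..<length cl} \<and>
        (\<forall>i<length rl. rl ! i \<le> int (card {j. (i, j) \<in> E}) \<and> int (card {j. (i, j) \<in> E}) \<le> rh ! i) \<and>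
        (\<forall>j<length cl. cl ! j \<le> int (card {i. (i, j) \<in> E}) \<and> int (card {i. (i, j) \<in> E}) \<le> ch ! j))"

text \<open>Inner while loop: while r_i = rbar_i, set i := i - 1 (stopping at index 0, a case
  that does not arise in the situation of the lemma).\<close>
fun p2_dec :: "int list \<Rightarrow> int list \<Rightarrow> nat \<Rightarrow> nat" where
  "p2_dec r rb i = (if i = 0 then 0 else if r ! i = rb ! i then p2_dec r rb (i - 1) else i)"

definition p2_step :: "int list \<times> int list \<times> nat \<Rightarrow> int list \<times> int list \<times> nat" where
  "p2_step st = (case st of (r, rb, i) \<Rightarrow>
     (let i' = p2_dec r rb i;
          j = (LEAST l. l < length r \<and> r ! l = r ! i')
      in (r[j := r ! j + 1], rb[i' := rb ! j, j := rb ! i'], i')))"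

definition p2_state :: "int list \<Rightarrow> int list \<Rightarrow> nat \<Rightarrow> int list \<times> int list \<times> nat" where
  "p2_state rlo rhi k = (p2_step ^^ k) (rlo, rhi, length rlo - 1)"

definition p2_r :: "int list \<Rightarrow> int list \<Rightarrow> nat \<Rightarrow> int list" where
  "p2_r rlo rhi k = fst (p2_state rlo rhi k)"

definition p2_rbar :: "int list \<Rightarrow> int list \<Rightarrow> nat \<Rightarrow> int list" where
  "p2_rbar rlo rhi k = fst (snd (p2_state rlo rhi k))"

end

theory Submission
  imports Defs
begin

definition G_ok :: "int list \<Rightarrow> int list \<Rightarrow> int list \<Rightarrow> (nat \<times> nat) set \<Rightarrow> bool" where
  "G_ok rl rh c E \<longleftrightarrow> E \<subseteq> {0..<length rl} \<times> {0..<length c} \<and>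
     (\<forall>i<length rl. rl ! i \<le> int (card {j. (i, j) \<in> E}) \<and> int (card {j. (i, j) \<in> E}) \<le> rh ! i) \<and>
     (\<forall>j<length c. int (card {i. (i, j) \<in> E}) = c ! j)"

lemma real_iff: "realizable rl rh c c \<longleftrightarrow> length rl = length rh \<and> (\<exists>E. G_ok rl rh c E)"
proof -
  have eqv: "(\<forall>j<n. (c::int list)!j \<le> f j \<and> f j \<le> c!j) = (\<forall>j<n. f j = c!j)" for n and f :: "nat \<Rightarrow> int"
    by (auto intro: order_antisym)
  show ?thesis unfolding realizable_def G_ok_def eqv by simp
qed

lemma sum_list_upd_int: "k < length xs \<Longrightarrow> sum_list (xs[k := x]) = sum_list xs + x - xs ! k" for xs :: "int list"
proof (induction xs arbitrary: k)
  case Nil then show ?case by simp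
next
  case (Cons a xs) then show ?case by (cases k) auto
qed

lemma rows_sum:
  fixes E :: "(nat \<times> nat) set" and n1 n2 :: nat
  assumes "E \<subseteq> {0..<n1} \<times> {0..<n2}"
  shows "card E = (\<Sum>i=0..<n1. card {j. (i,j)\<in>E})"
proof -
  have e: "E = Sigma {0..<n1} (\<lambda>i. {j. (i,j)\<in>E})"
  proof (rule set_eqI)
    fix x show "x \<in> E \<longleftrightarrow> x \<in> Sigma {0..<n1} (\<lambda>i. {j. (i,j)\<in>E})"
      using assms by (cases x) auto
  qed
  have f: "\<forall>i\<in>{0..<n1}. finite {j. (i,j)\<in>E}"
  proof
    fix i
    have "{j. (i,j)\<in>E} \<subseteq> {0..<n2}" using assms by blast
    then show "finite {j. (i,j)\<in>E}" by (rule finite_subset) simp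
  qed
  have "card E = card (Sigma {0..<n1} (\<lambda>i. {j. (i,j)\<in>E}))" using e by (rule arg_cong)
  also have "\<dots> = (\<Sum>i=0..<n1. card {j. (i,j)\<in>E})" by (rule card_SigmaI) (simp_all add: f)
  finally show ?thesis .
qed

lemma cols_sum:
  fixes E :: "(nat \<times> nat) set" and n1 n2 :: nat
  assumes "E \<subseteq> {0..<n1} \<times> {0..<n2}"
  shows "card E = (\<Sum>j=0..<n2. card {i. (i,j)\<in>E})"
proof -
  let ?F = "prod.swap ` E"
  have sub: "?F \<subseteq> {0..<n2} \<times> {0..<n1}" using assms by force
  have inj: "inj_on prod.swap E" by (rule inj_on_subset[OF _ subset_UNIV]) simp
  have c1: "card ?F = card E" by (rule card_image[OF inj])
  have c2: "\<And>j. {i. (j,i)\<in>?F} = {i. (i,j)\<in>E}" by simp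
  show ?thesis using rows_sum[OF sub] unfolding c1 c2 .
qed

lemma G_sum:
  assumes "G_ok r rb c E"
  shows "sum_list c = (\<Sum>i=0..<length r. int (card {j. (i,j)\<in>E}))"
proof -
  have sub: "E \<subseteq> {0..<length r} \<times> {0..<length c}" using assms by (simp add: G_ok_def)
  have "sum_list c = (\<Sum>j=0..<length c. c ! j)" by (simp add: sum_list_sum_nth)
  also have "\<dots> = (\<Sum>j=0..<length c. int (card {i. (i,j)\<in>E}))"
    using assms by (intro sum.cong) (auto simp: G_ok_def)
  also have "\<dots> = int (card E)" by (simp add: cols_sum[OF sub])
  also have "\<dots> = (\<Sum>i=0..<length r. int (card {j. (i,j)\<in>E}))" by (simp add: rows_sum[OF sub])
  finally show ?thesis .
qed

definition tr :: "nat \<Rightarrow> nat \<Rightarrow> nat \<Rightarrow> nat" where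
  "tr a b x = (if x = a then b else if x = b then a else x)"

lemma tr_tr[simp]: "tr a b (tr a b x) = x" by (auto simp: tr_def)

lemma tr_img: "tr a b ` S = {x. tr a b x \<in> S}"
proof (rule set_eqI)
  fix x show "x \<in> tr a b ` S \<longleftrightarrow> x \<in> {x. tr a b x \<in> S}"
  proof
    assume "x \<in> tr a b ` S" then obtain s where "s \<in> S" "x = tr a b s" by blast
    then show "x \<in> {x. tr a b x \<in> S}" by simp
  next
    assume "x \<in> {x. tr a b x \<in> S}"
    then have "tr a b (tr a b x) \<in> tr a b ` S" by blast
    then show "x \<in> tr a b ` S" by simp
  qed
qed

lemma tr_inj: "inj_on (tr a b) X"
  by (rule inj_on_inverseI[where g="tr a b"]) simp

lemma swap_G:
  assumes "G_ok r rb c E" "a < length r" "b < length r" "r ! a = r ! b" "length rb = length r"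
  shows "G_ok r (rb[a := rb ! b, b := rb ! a]) c {(x,y). (tr a b x, y) \<in> E}"
proof -
  let ?E = "{(x,y). (tr a b x, y) \<in> E}"
  have sub: "E \<subseteq> {0..<length r} \<times> {0..<length c}" using assms by (simp add: G_ok_def)
  have trlt: "x < length r \<Longrightarrow> tr a b x < length r" for x using assms by (auto simp: tr_def)
  have S1: "?E \<subseteq> {0..<length r} \<times> {0..<length c}"
  proof
    fix p assume "p \<in> ?E"
    then obtain x y where p: "p = (x,y)" "(tr a b x, y) \<in> E" by blast
    then have "tr a b x < length r" "y < length c" using sub by auto
    moreover have "x = tr a b (tr a b x)" by simp
    ultimately have "x < length r" using trlt by metis
    then show "p \<in> {0..<length r} \<times> {0..<length c}" using p \<open>y < length c\<close> by simp
  qed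
  have S2: "\<forall>i<length r. r ! i \<le> int (card {j. (i, j) \<in> ?E}) \<and> int (card {j. (i, j) \<in> ?E}) \<le> (rb[a := rb ! b, b := rb ! a]) ! i"
  proof (intro allI impI)
    fix i assume i: "i < length r"
    have row: "{j. (i, j) \<in> ?E} = {j. (tr a b i, j) \<in> E}" by simp
    have b1: "r ! tr a b i \<le> int (card {j. (tr a b i, j) \<in> E}) \<and> int (card {j. (tr a b i, j) \<in> E}) \<le> rb ! tr a b i"
      using assms(1) trlt[OF i] by (simp add: G_ok_def)
    have "r ! tr a b i = r ! i" using assms(4) by (auto simp: tr_def)
    moreover have "(rb[a := rb ! b, b := rb ! a]) ! i = rb ! tr a b i"
      using assms i by (auto simp: tr_def nth_list_update)
    ultimately show "r ! i \<le> int (card {j. (i, j) \<in> ?E}) \<and> int (card {j. (i, j) \<in> ?E}) \<le> (rb[a := rb ! b, b := rb ! a]) ! i"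
      using b1 row by simp
  qed
  have S3: "\<forall>j<length c. int (card {i. (i, j) \<in> ?E}) = c ! j"
  proof (intro allI impI)
    fix j assume j: "j < length c"
    have "{i. (i, j) \<in> ?E} = tr a b ` {i. (i, j) \<in> E}"
      unfolding tr_img by simp
    then have "card {i. (i, j) \<in> ?E} = card {i. (i, j) \<in> E}" by (simp add: card_image[OF tr_inj])
    then show "int (card {i. (i, j) \<in> ?E}) = c ! j" using assms(1) j by (simp add: G_ok_def)
  qed
  show ?thesis using S1 S2 S3 by (simp add: G_ok_def)
qed

lemma inc_G:
  assumes G: "G_ok r rb c E" and len: "length rb = length r" and j: "j < length r"
    and H1: "\<forall>l<length r. r!l < rb!l \<longrightarrow> r!j \<le> r!l"
    and H2: "r!j < rb!j \<or> (\<forall>l<length r. l \<noteq> j \<longrightarrow> r!l = rb!l)"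
    and S: "sum_list r < sum_list c"
  shows "\<exists>E'. G_ok (r[j := r!j+1]) rb c E'"
proof -
  define d where "d i = int (card {y. (i,y)\<in>E})" for i
  have sub: "E \<subseteq> {0..<length r} \<times> {0..<length c}" using G by (simp add: G_ok_def)
  have bnd: "\<And>i. i < length r \<Longrightarrow> r!i \<le> d i \<and> d i \<le> rb!i" using G by (simp add: G_ok_def d_def)
  have col: "\<And>y. y < length c \<Longrightarrow> int (card {i. (i, y) \<in> E}) = c ! y" using G by (simp add: G_ok_def)
  have finr: "\<And>i. finite {y. (i,y)\<in>E}"
  proof -
    fix i
    have "{y. (i,y)\<in>E} \<subseteq> {0..<length c}" using sub by blast
    then show "finite {y. (i,y)\<in>E}" by (rule finite_subset) simp
  qed
  have finc: "\<And>y. finite {i. (i,y)\<in>E}"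
  proof -
    fix y
    have "{i. (i,y)\<in>E} \<subseteq> {0..<length r}" using sub by blast
    then show "finite {i. (i,y)\<in>E}" by (rule finite_subset) simp
  qed
  have "\<exists>l<length r. r!l < d l"
  proof (rule ccontr)
    assume "\<not> ?thesis"
    then have "\<forall>l<length r. d l \<le> r!l" by auto
    then have "(\<Sum>i=0..<length r. d i) \<le> (\<Sum>i=0..<length r. r!i)" by (intro sum_mono) auto
    moreover have "sum_list c = (\<Sum>i=0..<length r. d i)" using G_sum[OF G] by (simp add: d_def)
    moreover have "sum_list r = (\<Sum>i=0..<length r. r!i)" by (simp add: sum_list_sum_nth)
    ultimately show False using S by simp
  qed
  then obtain l where l: "l < length r" "r!l < d l" by blast
  show ?thesis
  proof (cases "r!j < d j")
    case True
    have R1: "E \<subseteq> {0..<length (r[j := r ! j + 1])} \<times> {0..<length c}" using sub by simp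
    have R3: "\<forall>z<length c. int (card {i. (i, z) \<in> E}) = c ! z" using col by simp
    have R2: "\<forall>i<length (r[j := r ! j + 1]). r[j := r ! j + 1] ! i \<le> int (card {z. (i, z) \<in> E}) \<and> int (card {z. (i, z) \<in> E}) \<le> rb ! i"
    proof (intro allI impI)
      fix i assume i: "i < length (r[j := r ! j + 1])"
      then have i': "i < length r" by simp
      show "r[j := r ! j + 1] ! i \<le> int (card {z. (i, z) \<in> E}) \<and> int (card {z. (i, z) \<in> E}) \<le> rb ! i"
      proof (cases "i = j")
        case True then show ?thesis using \<open>r!j < d j\<close> bnd[OF j] j unfolding d_def by simp
      next
        case False then show ?thesis using bnd[OF i'] unfolding d_def by simp
      qed
    qed
    have "G_ok (r[j := r!j+1]) rb c E" unfolding G_ok_def by (rule conjI[OF R1 conjI[OF R2 R3]])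
    then show ?thesis by blast
  next
    case False
    then have dj: "d j = r!j" using bnd[OF j] by simp
    have lj: "l \<noteq> j" using l dj by auto
    have lt: "r!l < rb!l" using l(2) bnd[OF l(1)] by linarith
    have rjl: "r!j \<le> r!l" using H1 l lt by blast
    have rjb: "r!j < rb!j" using H2 l lj lt by auto
    have "card {y. (j,y)\<in>E} < card {y. (l,y)\<in>E}" using dj rjl l unfolding d_def by linarith
    moreover have "\<not> {y. (l,y)\<in>E} \<subseteq> {y. (j,y)\<in>E}"
    proof
      assume "{y. (l,y)\<in>E} \<subseteq> {y. (j,y)\<in>E}"
      then have "card {y. (l,y)\<in>E} \<le> card {y. (j,y)\<in>E}" by (rule card_mono[OF finr])
      then show False using \<open>card {y. (j,y)\<in>E} < card {y. (l,y)\<in>E}\<close> by simp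
    qed
    then obtain y where y: "(l,y)\<in>E" "(j,y)\<notin>E" by blast
    have yc: "y < length c" using y sub by auto
    define E' where "E' = insert (j,y) (E - {(l,y)})"
    have rowl: "{z. (l,z)\<in>E'} = {z. (l,z)\<in>E} - {y}" using lj by (auto simp: E'_def)
    have rowj: "{z. (j,z)\<in>E'} = insert y {z. (j,z)\<in>E}" using lj by (auto simp: E'_def)
    have rowo: "i \<noteq> l \<Longrightarrow> i \<noteq> j \<Longrightarrow> {z. (i,z)\<in>E'} = {z. (i,z)\<in>E}" for i by (auto simp: E'_def)
    have coly: "{i. (i,y)\<in>E'} = insert j ({i. (i,y)\<in>E} - {l})" using lj by (auto simp: E'_def)
    have colo: "z \<noteq> y \<Longrightarrow> {i. (i,z)\<in>E'} = {i. (i,z)\<in>E}" for z by (auto simp: E'_def)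
    have cl: "int (card {z. (l,z)\<in>E'}) = d l - 1"
    proof -
      have m: "y \<in> {z. (l,z)\<in>E}" using y by simp
      have pos: "card {z. (l,z)\<in>E} > 0" using m finr[of l] card_gt_0_iff by blast
      have e: "card {z. (l,z)\<in>E} = card ({z. (l,z)\<in>E} - {y}) + 1"
        using card_Diff_singleton[OF m] pos by simp
      have "int (card {z. (l,z)\<in>E}) = int (card ({z. (l,z)\<in>E} - {y})) + 1" by (subst e) simp
      then show ?thesis unfolding rowl d_def by linarith
    qed
    have cj: "int (card {z. (j,z)\<in>E'}) = d j + 1"
      unfolding rowj d_def using y finr by simp
    have cy: "card {i. (i,y)\<in>E'} = card {i. (i,y)\<in>E}"
    proof -
      have "card {i. (i,y)\<in>E'} = Suc (card ({i. (i,y)\<in>E} - {l}))"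
        unfolding coly using y finc by (simp)
      also have "\<dots> = card {i. (i,y)\<in>E}"
      proof -
        have m: "l \<in> {i. (i,y)\<in>E}" using y by simp
        have "card ({i. (i,y)\<in>E} - {l}) = card {i. (i,y)\<in>E} - 1" by (rule card_Diff_singleton[OF m])
        moreover have "card {i. (i,y)\<in>E} > 0" using m finc[of y] card_gt_0_iff by blast
        ultimately show ?thesis by simp
      qed
      finally show ?thesis .
    qed
    have R1: "E' \<subseteq> {0..<length (r[j := r ! j + 1])} \<times> {0..<length c}"
        using sub j yc by (auto simp: E'_def)
    have R2: "\<forall>i<length (r[j := r ! j + 1]). r[j := r ! j + 1] ! i \<le> int (card {z. (i, z) \<in> E'}) \<and> int (card {z. (i, z) \<in> E'}) \<le> rb ! i"
    proof (intro allI impI)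
      fix i assume i: "i < length (r[j := r ! j + 1])"
      then have i': "i < length r" by simp
      show "r[j := r ! j + 1] ! i \<le> int (card {z. (i, z) \<in> E'}) \<and> int (card {z. (i, z) \<in> E'}) \<le> rb ! i"
      proof (cases "i = j")
        case True then show ?thesis using cj dj rjb j by simp
      next
        case ij: False
        show ?thesis
        proof (cases "i = l")
          case True then show ?thesis using cl l bnd[OF l(1)] ij by simp
        next
          case False then show ?thesis using rowo[OF False ij] bnd[OF i'] ij by (simp add: d_def)
        qed
      qed
    qed
    have R3: "\<forall>z<length c. int (card {i. (i, z) \<in> E'}) = c ! z"
    proof (intro allI impI)
      fix z assume z: "z < length c"
      show "int (card {i. (i, z) \<in> E'}) = c ! z"
      proof (cases "z = y")
        case True then show ?thesis using cy col z by simp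
      next
        case False then show ?thesis using colo col z by simp
      qed
    qed
    have "G_ok (r[j := r!j+1]) rb c E'" unfolding G_ok_def by (rule conjI[OF R1 conjI[OF R2 R3]])
    then show ?thesis by blast
  qed
qed

declare p2_dec.simps[simp del]

lemma dec: "p2_dec r rb i \<le> i \<and> (\<forall>l. p2_dec r rb i < l \<and> l \<le> i \<longrightarrow> r!l = rb!l) \<and>
   (p2_dec r rb i = 0 \<or> r!(p2_dec r rb i) \<noteq> rb!(p2_dec r rb i))"
proof (induction r rb i rule: p2_dec.induct)
  case (1 r rb i)
  have eq: "p2_dec r rb i = (if i = 0 then 0 else if r ! i = rb ! i then p2_dec r rb (i - 1) else i)"
    by (rule p2_dec.simps)
  show ?case
  proof (cases "i = 0")
    case True then show ?thesis using eq by auto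
  next
    case i0: False
    show ?thesis
    proof (cases "r ! i = rb ! i")
      case True
      have IH: "p2_dec r rb (i-1) \<le> i-1 \<and> (\<forall>l. p2_dec r rb (i-1) < l \<and> l \<le> i-1 \<longrightarrow> r!l = rb!l) \<and>
         (p2_dec r rb (i-1) = 0 \<or> r!(p2_dec r rb (i-1)) \<noteq> rb!(p2_dec r rb (i-1)))"
        using 1 i0 True by blast
      have e2: "p2_dec r rb i = p2_dec r rb (i-1)" using eq i0 True by simp
      show ?thesis unfolding e2
      proof (intro conjI allI impI)
        show "p2_dec r rb (i - 1) \<le> i" using IH by (meson diff_le_self order_trans)
      next
        fix l assume "p2_dec r rb (i - 1) < l \<and> l \<le> i"
        then show "r ! l = rb ! l" using IH True by (cases "l = i") auto
      next
        show "p2_dec r rb (i - 1) = 0 \<or> r ! p2_dec r rb (i - 1) \<noteq> rb ! p2_dec r rb (i - 1)" using IH by blast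
      qed
    next
      case False then show ?thesis using eq i0 by auto
    qed
  qed
qed

definition Inv :: "int list \<Rightarrow> int list \<times> int list \<times> nat \<Rightarrow> bool" where
  "Inv c st \<longleftrightarrow> (case st of (r, rb, i) \<Rightarrow> length rb = length r \<and> i < length r \<and> sorted_wrt (\<ge>) r \<and>
     (\<forall>l. i < l \<and> l < length r \<longrightarrow> r!l = rb!l) \<and> (\<exists>E. G_ok r rb c E))"

lemma step:
  assumes I: "Inv c (r, rb, i)" and S: "sum_list r < sum_list c"
  shows "Inv c (p2_step (r, rb, i)) \<and> sum_list (fst (p2_step (r,rb,i))) = sum_list r + 1"
proof -
  let ?n = "length r"
  obtain E where G: "G_ok r rb c E" using I by (auto simp: Inv_def)
  have len: "length rb = ?n" and iN: "i < ?n" and srt0: "sorted_wrt (\<ge>) r"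
    and tight0: "\<forall>l. i < l \<and> l < ?n \<longrightarrow> r!l = rb!l" using I by (auto simp: Inv_def)
  have srt: "\<And>a b. a < b \<Longrightarrow> b < ?n \<Longrightarrow> r!b \<le> r!a" using srt0 by (simp add: sorted_wrt_iff_nth_less)
  have srt': "\<And>a b. a \<le> b \<Longrightarrow> b < ?n \<Longrightarrow> r!b \<le> r!a" using srt by (metis order.order_iff_strict order_refl)
  have rle: "\<And>l. l < ?n \<Longrightarrow> r!l \<le> rb!l" using G by (fastforce simp: G_ok_def)
  define i' where "i' = p2_dec r rb i"
  define j where "j = (LEAST l. l < length r \<and> r!l = r!i')"
  have st: "p2_step (r,rb,i) = (r[j := r!j+1], rb[i' := rb!j, j := rb!i'], i')"
    by (simp add: p2_step_def Let_def i'_def j_def)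
  have D: "i' \<le> i" "\<forall>l. i' < l \<and> l \<le> i \<longrightarrow> r!l = rb!l" "i' = 0 \<or> r!i' \<noteq> rb!i'"
    using dec[of r rb i] unfolding i'_def by blast+
  have tight: "\<And>l. i' < l \<Longrightarrow> l < ?n \<Longrightarrow> r!l = rb!l" using D tight0 by (meson not_le)
  have i'n: "i' < ?n" using D iN by simp
  have jP: "j < ?n \<and> r!j = r!i'" unfolding j_def by (rule LeastI[of _ i']) (simp add: i'n)
  have jle: "j \<le> i'" unfolding j_def by (rule Least_le) (simp add: i'n)
  have jmin: "\<And>l. l < j \<Longrightarrow> r!l \<noteq> r!i'" using jP unfolding j_def
    by (metis (mono_tags, lifting) not_less_Least order.strict_trans)
  define rb' where "rb' = rb[i' := rb!j, j := rb!i']"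
  have rb'n: "\<And>l. l < ?n \<Longrightarrow> rb'!l = (if l = j then rb!i' else if l = i' then rb!j else rb!l)"
    using len jP i'n by (auto simp: rb'_def nth_list_update)
  have G1: "G_ok r rb' c {(x,y). (tr i' j x, y) \<in> E}"
    unfolding rb'_def by (rule swap_G[OF G i'n]) (use jP len in auto)
  have H1: "\<forall>l<?n. r!l < rb'!l \<longrightarrow> r!j \<le> r!l"
  proof (intro allI impI)
    fix l assume l: "l < ?n" "r!l < rb'!l"
    show "r!j \<le> r!l"
    proof (cases "l \<le> i'")
      case True then show ?thesis using srt'[of l i'] i'n jP by simp
    next
      case False then show ?thesis using l rb'n[OF l(1)] tight[of l] jle by auto
    qed
  qed
  have H2: "r!j < rb'!j \<or> (\<forall>l<?n. l \<noteq> j \<longrightarrow> r!l = rb'!l)"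
  proof (cases "r!i' \<noteq> rb!i'")
    case True then show ?thesis using rle[OF i'n] rb'n jP by auto
  next
    case False
    then have "i' = 0" using D by blast
    then have "j = 0" using jle by simp
    then show ?thesis using rb'n tight \<open>i' = 0\<close> by auto
  qed
  obtain E2 where G2: "G_ok (r[j := r!j+1]) rb' c E2"
    using inc_G[OF G1 _ _ H1 H2 S] len jP by (auto simp: rb'_def)
  have srtN: "sorted_wrt (\<ge>) (r[j := r!j+1])"
    unfolding sorted_wrt_iff_nth_less
  proof (intro allI impI)
    fix a b assume ab: "a < b" "b < length (r[j := r ! j + 1])"
    then have b: "b < ?n" by simp
    show "r[j := r ! j + 1] ! b \<le> r[j := r ! j + 1] ! a"
    proof (cases "b = j")
      case True
      then have "r!j \<le> r!a" "r!a \<noteq> r!j" using srt[of a b] ab b jmin[of a] jP by auto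
      then show ?thesis using True ab b by (simp add: nth_list_update)
    next
      case False
      then show ?thesis using srt[of a b] ab b srt'[of j b] jP
        by (cases "a = j") (auto simp: nth_list_update)
    qed
  qed
  have "Inv c (r[j := r!j+1], rb', i')"
    unfolding Inv_def using G2 srtN i'n len tight rb'n jle
    by (auto simp: rb'_def nth_list_update)
  moreover have "sum_list (r[j := r!j+1]) = sum_list r + 1" using jP by (simp add: sum_list_upd_int)
  ultimately show ?thesis unfolding st rb'_def by simp
qed

lemma len_step: "length (fst (p2_step st)) = length (fst st)"
  by (cases st) (simp add: p2_step_def Let_def)

lemma len_state: "length (p2_r rlo rhi k) = length rlo"
  unfolding p2_r_def p2_state_def by (induction k) (simp_all add: len_step)

lemma inv_k:
  assumes n: "rlo \<noteq> []" and l: "length rhi = length rlo" and srt: "sorted_wrt (\<ge>) rlo"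
    and R: "realizable rlo rhi c c" and k: "int k \<le> sum_list c - sum_list rlo"
  shows "m \<le> k \<Longrightarrow> Inv c (p2_state rlo rhi m) \<and> sum_list (p2_r rlo rhi m) = sum_list rlo + int m"
proof (induction m)
  case 0
  have "Inv c (rlo, rhi, length rlo - 1)" using n l srt R by (auto simp: Inv_def real_iff)
  then show ?case by (simp add: p2_state_def p2_r_def)
next
  case (Suc m)
  then have IH: "Inv c (p2_state rlo rhi m)" "sum_list (p2_r rlo rhi m) = sum_list rlo + int m" by auto
  obtain r rb i where eq: "p2_state rlo rhi m = (r, rb, i)" by (cases "p2_state rlo rhi m") auto
  have rr: "p2_r rlo rhi m = r" using eq by (simp add: p2_r_def)
  have lt: "sum_list r < sum_list c" using IH(2) rr Suc.prems k by simp
  have st: "p2_state rlo rhi (Suc m) = p2_step (r, rb, i)" using eq by (simp add: p2_state_def)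
  have "Inv c (p2_step (r, rb, i)) \<and> sum_list (fst (p2_step (r,rb,i))) = sum_list r + 1"
    using step[of c r rb i] IH(1) eq lt by simp
  then show ?case using st rr IH(2) by (simp add: p2_r_def)
qed

lemma lemma3_nil:
  fixes rlo rhi c :: "int list" and k :: nat
  assumes "length rhi = length rlo"
    and "sorted_wrt (\<ge>) rlo"
    and "sorted_wrt (\<ge>) c"
    and "list_all2 (\<le>) rlo rhi"
    and "realizable rlo rhi c c"
    and "int k \<le> sum_list c - sum_list rlo"
    and True: "rlo = []"
  shows "realizable (p2_r rlo rhi k) (p2_r rlo rhi k) c c \<longleftrightarrow> int k = sum_list c - sum_list rlo"
proof -
  have rh: "rhi = []" using True assms(1) by simp
  have pr: "p2_r rlo rhi k = []" using len_state[of rlo rhi k] True by simp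
  obtain E where G: "G_ok rlo rhi c E" using assms(5) real_iff by blast
  have "sum_list c = 0" using G_sum[OF G] True by simp
  then have "int k = sum_list c - sum_list rlo" using assms(6) True by simp
  moreover have "realizable (p2_r rlo rhi k) (p2_r rlo rhi k) c c" using assms(5) pr True rh by simp
  ultimately show ?thesis by simp
qed

lemma lemma3_cons:
  fixes rlo rhi c :: "int list" and k :: nat
  assumes "length rhi = length rlo"
    and "sorted_wrt (\<ge>) rlo"
    and "sorted_wrt (\<ge>) c"
    and "list_all2 (\<le>) rlo rhi"
    and "realizable rlo rhi c c"
    and "int k \<le> sum_list c - sum_list rlo"
    and False: "rlo \<noteq> []"
  shows "realizable (p2_r rlo rhi k) (p2_r rlo rhi k) c c \<longleftrightarrow> int k = sum_list c - sum_list rlo"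
proof -
  have I: "Inv c (p2_state rlo rhi k) \<and> sum_list (p2_r rlo rhi k) = sum_list rlo + int k"
    using inv_k[OF False assms(1,2,5,6)] by simp
  obtain r rb i where eq: "p2_state rlo rhi k = (r, rb, i)" by (cases "p2_state rlo rhi k") auto
  have rr: "p2_r rlo rhi k = r" using eq by (simp add: p2_r_def)
  obtain E where G: "G_ok r rb c E" using I eq by (auto simp: Inv_def)
  have sr: "sum_list r = sum_list rlo + int k" using I rr by simp
  have sumr: "sum_list r = (\<Sum>i=0..<length r. r!i)" by (simp add: sum_list_sum_nth)
  show ?thesis unfolding rr
  proof
    assume "realizable r r c c"
    then obtain E' where G': "G_ok r r c E'" using real_iff by blast
    have "sum_list c = (\<Sum>i=0..<length r. int (card {j. (i,j)\<in>E'}))" by (rule G_sum[OF G'])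
    also have "\<dots> = (\<Sum>i=0..<length r. r!i)"
    proof (rule sum.cong)
      fix i assume "i \<in> {0..<length r}"
      then have "i < length r" by simp
      then have "r!i \<le> int (card {j. (i,j)\<in>E'}) \<and> int (card {j. (i,j)\<in>E'}) \<le> r!i"
        using G' unfolding G_ok_def by blast
      then show "int (card {j. (i,j)\<in>E'}) = r!i" by simp
    qed simp
    finally show "int k = sum_list c - sum_list rlo" using sr sumr by simp
  next
    assume h: "int k = sum_list c - sum_list rlo"
    define d where "d i = int (card {j. (i,j)\<in>E})" for i
    have bnd: "\<And>i. i < length r \<Longrightarrow> r!i \<le> d i \<and> d i \<le> rb!i" using G by (simp add: G_ok_def d_def)
    have sc: "sum_list c = (\<Sum>i=0..<length r. d i)" using G_sum[OF G] by (simp add: d_def)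
    have sub: "(\<Sum>i=0..<length r. d i - r!i) = (\<Sum>i=0..<length r. d i) - (\<Sum>i=0..<length r. r!i)"
      by (rule sum_subtractf)
    have s0: "(\<Sum>i=0..<length r. d i - r!i) = 0" using sc sub sr sumr h by linarith
    have nn: "\<And>i. i \<in> {0..<length r} \<Longrightarrow> 0 \<le> d i - r!i"
    proof -
      fix i assume "i \<in> {0..<length r}"
      then have "i < length r" by simp
      then show "0 \<le> d i - r!i" using bnd[of i] by linarith
    qed
    have "((\<Sum>i=0..<length r. d i - r!i) = 0) = (\<forall>i\<in>{0..<length r}. d i - r!i = 0)"
      by (rule sum_nonneg_eq_0_iff) (simp, erule nn)
    then have z: "\<forall>i\<in>{0..<length r}. d i - r!i = 0" using s0 by simp
    have R2: "\<forall>i<length r. r ! i \<le> int (card {j. (i, j) \<in> E}) \<and> int (card {j. (i, j) \<in> E}) \<le> r ! i"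
    proof (intro allI impI)
      fix i assume "i < length r"
      then have "d i = r!i" using z by simp
      then show "r ! i \<le> int (card {j. (i, j) \<in> E}) \<and> int (card {j. (i, j) \<in> E}) \<le> r ! i"
        unfolding d_def by simp
    qed
    have "G_ok r r c E" using G R2 unfolding G_ok_def by blast
    then show "realizable r r c c" using real_iff by blast
  qed
qed

theorem lemma3:
  fixes rlo rhi c :: "int list" and k :: nat
  assumes "length rhi = length rlo"
    and "sorted_wrt (\<ge>) rlo"
    and "sorted_wrt (\<ge>) c"
    and "list_all2 (\<le>) rlo rhi"
    and "realizable rlo rhi c c"
    and "int k \<le> sum_list c - sum_list rlo"
  shows "realizable (p2_r rlo rhi k) (p2_r rlo rhi k) c c \<longleftrightarrow> int k = sum_list c - sum_list rlo"
proof (cases "rlo = []")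
  case True
  then show ?thesis using lemma3_nil[OF assms] by blast
next
  case False
  then show ?thesis using lemma3_cons[OF assms] by blast
qed

end
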